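(* Let $n\ge1$. For every $(x,y,z)\in V_n$: the length of $\tau_n(xyz)\in(V_n)^*$ is $n+1-x$; the first item of $\tau_n(xyz)$ is $(0,x-y+1,n)$ or $(0,x-y+1,n+1)$; and exactly $z-x$ items of $\tau_n(xyz)$ have last coordinate equal to $n$. In particular, $\tau_n$ is injective.
   Context: $V_n=\{(v_0,v_1,v_2)\in\mathbb{Z}^3: 0\le v_0\le v_1\le 1,\ v_1\le v_2\le n+1\}$, elements written as words $v_0v_1v_2$; write $\bar n=n+1$. $\tau_n:V_n\to V_n^*$ (finite sequences over $V_n$) is defined by $\tau_n(xyz)=(0,x-y+1,n)\cdot(11n)^{z-x-1}\cdot(11\bar n)^{n+1-z}$ if $x\ne z$, and $\tau_n(xyz)=(0,x-y+1,n+1)\cdot(11\bar n)^{n-z}$ if $x=z$, where $\cdot$ is concatenation and exponents denote repetition. *)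

theory Defs
  imports Main
begin

type_synonym triple = "int \<times> int \<times> int"

definition V :: "nat \<Rightarrow> triple set" where
  "V n = {(v0, v1, v2). 0 \<le> v0 \<and> v0 \<le> v1 \<and> v1 \<le> 1 \<and> v1 \<le> v2 \<and> v2 \<le> int n + 1}"

definition tau :: "nat \<Rightarrow> triple \<Rightarrow> triple list" where
  "tau n v = (case v of (x, y, z) \<Rightarrow>
     (if x \<noteq> z then
        [(0, x - y + 1, int n)] @ replicate (nat (z - x - 1)) (1, 1, int n)
          @ replicate (nat (int n + 1 - z)) (1, 1, int n + 1)
      else
        [(0, x - y + 1, int n + 1)] @ replicate (nat (int n - z)) (1, 1, int n + 1)))"

end

theory Submission
  imports Defs
begin

lemma props:
  assumes "n \<ge> 1" "(x, y, z) \<in> V n"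
  shows "int (length (tau n (x, y, z))) = int n + 1 - x
          \<and> (hd (tau n (x, y, z)) = (0, x - y + 1, int n)
             \<or> hd (tau n (x, y, z)) = (0, x - y + 1, int n + 1))
          \<and> int (length (filter (\<lambda>(a, b, c). c = int n) (tau n (x, y, z)))) = z - x"
  using assms by (auto simp: V_def tau_def filter_replicate)

lemma hd2: "fst (snd (hd (tau n (x, y, z)))) = x - y + 1"
  by (simp add: tau_def)

theorem lemma5p1:
  fixes n :: nat
  assumes "n \<ge> 1"
  shows "(\<forall>x y z. (x, y, z) \<in> V n \<longrightarrow>
            int (length (tau n (x, y, z))) = int n + 1 - x
          \<and> (hd (tau n (x, y, z)) = (0, x - y + 1, int n)
             \<or> hd (tau n (x, y, z)) = (0, x - y + 1, int n + 1))
          \<and> int (length (filter (\<lambda>(a, b, c). c = int n) (tau n (x, y, z)))) = z - x)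
         \<and> inj_on (tau n) (V n)"
proof (intro conjI allI impI)
  fix x y z assume "(x, y, z) \<in> V n"
  from props[OF assms this] show
    "int (length (tau n (x, y, z))) = int n + 1 - x"
    "hd (tau n (x, y, z)) = (0, x - y + 1, int n) \<or> hd (tau n (x, y, z)) = (0, x - y + 1, int n + 1)"
    "int (length (filter (\<lambda>(a, b, c). c = int n) (tau n (x, y, z)))) = z - x" by auto
next
  show "inj_on (tau n) (V n)"
  proof (rule inj_onI)
    fix u v assume u: "u \<in> V n" and v: "v \<in> V n" and e: "tau n u = tau n v"
    obtain x y z where U: "u = (x, y, z)" by (cases u) auto
    obtain x' y' z' where W: "v = (x', y', z')" by (cases v) auto
    note pu = props[OF assms u[unfolded U]] and pv = props[OF assms v[unfolded W]]
    have "x = x'" using pu pv e U W by simp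
    moreover have "z = z'" using pu pv e U W \<open>x = x'\<close> by simp
    moreover have "y = y'" using hd2[of n x y z] hd2[of n x' y' z'] e U W \<open>x = x'\<close> by simp
    ultimately show "u = v" using U W by simp
  qed
qed

end
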